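(* Consider the binary sequential learning model with heterogeneous privacy budgets described in the context, with signal accuracy $p\in(1/2,1)$. Let $\alpha=(1-p)/p$, $\bar u=\mathbb{E}_{\varepsilon_n}\!\left[\frac{1}{1+e^{\varepsilon_n}}\right]$, and for each integer $k\ge 2$ let $$\tilde v_k=\frac{1-\alpha^{\frac{k-2}{k-1}}}{1-\alpha^{\frac{k-2}{k-1}}+\alpha^{\frac{-1}{k-1}}-\alpha}.$$ Suppose each agent $n$ adopts the randomized response strategy with flip probability $u_n(\varepsilon_n)=\frac{1}{1+e^{\varepsilon_n}}$. Then for $\bar u\in[\tilde v_k,\tilde v_{k+1})$, the information cascade threshold $k$ remains unchanged, and the probability of a correct cascade decreases with the expected flipping probability $\bar u$.
   Context: Binary model: unknown state $\theta\in\{-1,+1\}$ with uniform prior; agents $n=1,2,\dots$ act in sequence; agent $n$ privately observes $s_n\in\{-1,+1\}$, i.i.d. given $\theta$ with $\mathbb{P}(s_n=\theta\mid\theta)=p$. Each agent $n$ has a privacy budget $\varepsilon_n$ drawn independently from a distribution for which $\bar u=\mathbb{E}[1/(1+e^{\varepsilon_n})]$ exists. Before a cascade, agent $n$'s intended action equals her signal and she reports $x_n=a_n$ with probability $1-u_n$ and $x_n=-a_n$ with probability $u_n=1/(1+e^{\varepsilon_n})$. Agents interpret the public history using the expected flip probability $\bar u$: if there are $k$ more $+1$ reports than $-1$ reports, the public log-likelihood ratio is $k\log\frac{\bar u(1-p)+p(1-\bar u)}{(1-p)(1-\bar u)+\bar u p}$. Let $\bar\rho=\frac{(1-\bar u)(1-p)+\bar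 u p}{\bar u(1-p)+p(1-\bar u)}$. The information cascade threshold is $k=\lfloor\log_{\bar\rho}\frac{1-p}{p}\rfloor+1$. An information cascade starts at the first agent whose history has (number of $+1$ reports) $-$ (number of $-1$ reports) equal to $\pm k$; from then on all agents take and truthfully report the action favored by the history. It is a correct cascade if that action equals $\theta$. *)

theory Defs
  imports "HOL-Probability.Probability"
begin

definition flip_prob :: "real \<Rightarrow> real" where
  "flip_prob e = 1 / (1 + exp e)"

definition ubar :: "real measure \<Rightarrow> real" where
  "ubar D = (\<integral>e. flip_prob e \<partial>D)"

definition rho_bar :: "real \<Rightarrow> real \<Rightarrow> real" where
  "rho_bar p ub = ((1 - ub) * (1 - p) + ub * p) / (ub * (1 - p) + p * (1 - ub))"

definition cascade_threshold :: "real \<Rightarrow> real \<Rightarrow> int" where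
  "cascade_threshold p ub = \<lfloor>log (rho_bar p ub) ((1 - p) / p)\<rfloor> + 1"

definition v_tilde :: "real \<Rightarrow> nat \<Rightarrow> real" where
  "v_tilde p k = (let a = (1 - p) / p;
                      t = a powr ((real k - 2) / (real k - 1))
                  in (1 - t) / (1 - t + a powr (-1 / (real k - 1)) - a))"

text \<open>Law of a single pre-cascade report, relative to the true state theta:
  True means the report equals theta.  The agent draws her budget e from D,
  her signal is correct (s = True) with probability p, and she flips (f = True)
  with probability flip_prob e; the report equals theta iff s differs from f.\<close>
definition report_law :: "real \<Rightarrow> real measure \<Rightarrow> bool measure" where
  "report_law p D = D \<bind> (\<lambda>e. measure_pmf
      (do { s \<leftarrow> bernoulli_pmf p; f \<leftarrow> bernoulli_pmf (flip_prob e);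
            return_pmf (s \<noteq> f) }))"

definition walk :: "bool stream \<Rightarrow> nat \<Rightarrow> int" where
  "walk w n = (\<Sum>i<n. if w !! i then 1 else -1)"

text \<open>Probability of a correct cascade: the i.i.d. pre-cascade reports drive the
  public difference, which first reaches +-k (k the cascade threshold) at the
  side agreeing with theta.\<close>
definition correct_cascade_prob :: "real \<Rightarrow> real measure \<Rightarrow> real" where
  "correct_cascade_prob p D =
     (let k = cascade_threshold p (ubar D) in
      measure (stream_space (report_law p D))
        {w. \<exists>n. walk w n = k \<and> (\<forall>m<n. \<bar>walk w m\<bar> < k)})"

end

theory Submission
  imports Defs
begin

lemma walk_0[simp]: "walk w 0 = 0" by (simp add: walk_def)
lemma walk_Suc: "walk w (Suc n) = walk w n + (if w !! n then 1 else -1)"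
  by (simp add: walk_def)
lemma walk_Stream: "walk (x ## w) (Suc n) = (if x then 1 else -1) + walk w n"
  unfolding walk_def by (subst sum.lessThan_Suc_shift) simp

lemma walk_meas[measurable]: "(\<lambda>w. walk w n) \<in> measurable (stream_space (count_space UNIV)) (count_space UNIV)"
proof (induction n)
  case 0 then show ?case by (simp add: walk_def)
next
  case (Suc n)
  then show ?case unfolding walk_Suc by measurable
qed

definition Ev :: "nat \<Rightarrow> int \<Rightarrow> bool stream set" where
  "Ev N j = {w. \<exists>n. j + walk w n = int N \<and> (\<forall>m<n. 0 < j + walk w m \<and> j + walk w m < int N)}"

lemma walk_set: "{w. P (walk w n)} \<in> sets (stream_space (count_space UNIV))"
proof -
  have "(\<lambda>w. walk w n) -` {x. P x} \<inter> space (stream_space (count_space UNIV)) \<in> sets (stream_space (count_space UNIV))"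
    by (rule measurable_sets[OF walk_meas]) simp
  then show ?thesis by (simp add: space_stream_space vimage_def)
qed

lemma walk_all_set: "{w. \<forall>m<n. Q (walk w m)} \<in> sets (stream_space (count_space UNIV))"
proof (induction n)
  case 0
  have "{w. \<forall>m<(0::nat). Q (walk w m)} = space (stream_space (count_space UNIV))"
    by (simp add: space_stream_space)
  then show ?case by (metis sets.top)
next
  case (Suc n)
  have "{w. \<forall>m<Suc n. Q (walk w m)} = {w. \<forall>m<n. Q (walk w m)} \<inter> {w. Q (walk w n)}"
    by (auto simp: less_Suc_eq)
  then show ?case using Suc walk_set by simp
qed

lemma Ev_sets: "Ev N j \<in> sets (stream_space (count_space UNIV))"
proof -
  have "Ev N j = (\<Union>n\<in>UNIV. {w. (\<lambda>x. j + x = int N) (walk w n)} \<inter> {w. \<forall>m<n. (\<lambda>x. 0 < j + x \<and> j + x < int N) (walk w m)})"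
    by (auto simp: Ev_def)
  also have "\<dots> \<in> sets (stream_space (count_space UNIV))"
    by (intro sets.countable_UN'' sets.Int walk_set walk_all_set) auto
  finally show ?thesis .
qed

lemma Ev_top: "Ev N (int N) = UNIV"
  unfolding Ev_def by (auto intro: exI[of _ 0])

lemma Ev_bot: assumes "0 < N" shows "Ev N 0 = {}"
proof -
  have False if "walk w n = int N" "\<forall>m<n. 0 < walk w m \<and> walk w m < int N" for w n
  proof (cases "n = 0")
    case True then show False using that assms by simp
  next
    case False then show False using that(2) by (auto dest!: spec[of _ 0])
  qed
  then show ?thesis unfolding Ev_def by auto
qed

lemma Ev_step:
  assumes "0 < j" "j < int N"
  shows "(x ## w \<in> Ev N j) = (w \<in> Ev N (j + (if x then 1 else -1)))"
proof
  assume "x ## w \<in> Ev N j"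
  then obtain n where n: "j + walk (x ## w) n = int N"
     "\<forall>m<n. 0 < j + walk (x ## w) m \<and> j + walk (x ## w) m < int N"
    unfolding Ev_def by blast
  have "n \<noteq> 0"
  proof
    assume "n = 0" with n(1) assms show False by simp
  qed
  then obtain n' where n': "n = Suc n'" by (cases n) auto
  show "w \<in> Ev N (j + (if x then 1 else -1))"
    unfolding Ev_def
  proof (intro CollectI exI[of _ n'] conjI allI impI)
    show "j + (if x then 1 else - 1) + walk w n' = int N" using n(1) by (simp add: n' walk_Stream)
  next
    fix m assume "m < n'"
    then have "Suc m < n" by (simp add: n')
    then show "0 < j + (if x then 1 else - 1) + walk w m" "j + (if x then 1 else - 1) + walk w m < int N"
      using n(2) by (auto simp: walk_Stream dest!: spec[of _ "Suc m"])
  qed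
next
  assume "w \<in> Ev N (j + (if x then 1 else -1))"
  then obtain n where n: "j + (if x then 1 else -1) + walk w n = int N"
     "\<forall>m<n. 0 < j + (if x then 1 else -1) + walk w m \<and> j + (if x then 1 else -1) + walk w m < int N"
    unfolding Ev_def by blast
  have "\<forall>m<Suc n. 0 < j + walk (x ## w) m \<and> j + walk (x ## w) m < int N"
  proof (intro allI impI)
    fix m assume m: "m < Suc n"
    show "0 < j + walk (x ## w) m \<and> j + walk (x ## w) m < int N"
    proof (cases m)
      case 0 then show ?thesis using assms by simp
    next
      case (Suc m')
      then have "m' < n" using m by simp
      then show ?thesis using n(2) Suc by (auto simp: walk_Stream)
    qed
  qed
  moreover have "j + walk (x ## w) (Suc n) = int N" using n(1) by (simp add: walk_Stream)
  ultimately show "x ## w \<in> Ev N j" unfolding Ev_def by blast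
qed

lemma gambler_rec:
  fixes q :: real and N :: nat
  assumes "0 \<le> q" "q \<le> 1" "0 < j" "j < int N"
  shows "measure (stream_space (measure_pmf (bernoulli_pmf q))) (Ev N j) =
     q * measure (stream_space (measure_pmf (bernoulli_pmf q))) (Ev N (j+1))
     + (1-q) * measure (stream_space (measure_pmf (bernoulli_pmf q))) (Ev N (j-1))"
proof -
  let ?M = "measure_pmf (bernoulli_pmf q)"
  let ?S = "stream_space ?M"
  have sets_S: "sets ?S = sets (stream_space (count_space UNIV))"
    by (rule sets_stream_space_cong) simp
  have meas: "{x \<in> space ?S. x \<in> Ev N j} \<in> sets ?S"
    using Ev_sets sets_S by (simp add: space_stream_space)
  have eqs: "{x \<in> space ?S. x \<in> Ev N j} = Ev N j" by (simp add: space_stream_space)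
  have "ennreal (measure ?S {x \<in> space ?S. x \<in> Ev N j}) =
      (\<integral>\<^sup>+t. ennreal (measure ?S {x \<in> space ?S. t ## x \<in> Ev N j}) \<partial>?M)"
    by (rule prob_space.prob_stream_space[OF prob_space_measure_pmf meas])
  also have "\<dots> = (\<integral>\<^sup>+t. ennreal (measure ?S (Ev N (j + (if t then 1 else -1)))) \<partial>?M)"
    using Ev_step[OF assms(3,4)] by (simp add: space_stream_space)
  also have "\<dots> = ennreal (measure ?S (Ev N (j+1))) * ennreal q + ennreal (measure ?S (Ev N (j-1))) * ennreal (1-q)"
    using assms by simp
  also have "\<dots> = ennreal (q * measure ?S (Ev N (j+1)) + (1-q) * measure ?S (Ev N (j-1)))"
    using assms by (simp add: ennreal_mult'' mult.commute)
  finally have "ennreal (measure ?S (Ev N j)) = ennreal (q * measure ?S (Ev N (j+1)) + (1-q) * measure ?S (Ev N (j-1)))"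
    unfolding eqs .
  then show ?thesis using assms by (subst (asm) ennreal_inj) auto
qed

lemma rec_sol:
  fixes e :: "nat \<Rightarrow> real" and q :: real
  assumes q: "0 < q" and e0: "e 0 = 0"
    and rec: "\<And>i. 0 < i \<Longrightarrow> i < N \<Longrightarrow> e i = q * e (Suc i) + (1-q) * e (i-1)"
    and iN: "i \<le> N"
  shows "e i = e 1 * (\<Sum>l<i. ((1-q)/q)^l)"
proof -
  define r where "r = (1-q)/q"
  have qr: "1 - q - q * r = 0" using q by (simp add: r_def)
  have key: "Suc i \<le> N \<longrightarrow> e i = e 1 * (\<Sum>l<i. r^l) \<and> e (Suc i) = e 1 * (\<Sum>l<Suc i. r^l)" for i
  proof (induction i)
    case 0 show ?case using e0 by simp
  next
    case (Suc i)
    show ?case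
    proof
      assume le: "Suc (Suc i) \<le> N"
      with Suc.IH have h: "e i = e 1 * (\<Sum>l<i. r^l)" "e (Suc i) = e 1 * (\<Sum>l<Suc i. r^l)" by auto
      have "e (Suc i) = q * e (Suc (Suc i)) + (1-q) * e i" using rec[of "Suc i"] le by simp
      then have eq: "q * e (Suc (Suc i)) = e (Suc i) - (1-q) * e i" by simp
      have d: "e (Suc i) - (1-q) * e i - q * (e 1 * (\<Sum>l<Suc (Suc i). r^l)) = (1 - q - q * r) * (e 1 * r^i)"
        unfolding h by (simp add: algebra_simps)
      have "q * e (Suc (Suc i)) = q * (e 1 * (\<Sum>l<Suc (Suc i). r^l))" using d qr eq by simp
      then have "e (Suc (Suc i)) = e 1 * (\<Sum>l<Suc (Suc i). r^l)" using q by simp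
      with h show "e (Suc i) = e 1 * (\<Sum>l<Suc i. r^l) \<and> e (Suc (Suc i)) = e 1 * (\<Sum>l<Suc (Suc i). r^l)" by simp
    qed
  qed
  show ?thesis
  proof (cases i)
    case 0 then show ?thesis using e0 by simp
  next
    case (Suc i')
    then show ?thesis using key[of i'] iN by (simp add: r_def)
  qed
qed

lemma gambler:
  fixes q :: real and K :: nat
  assumes q: "1/2 < q" "q < 1" and K: "0 < K"
  shows "measure (stream_space (measure_pmf (bernoulli_pmf q))) (Ev (2*K) (int K)) = 1/(1+((1-q)/q)^K)"
proof -
  let ?S = "stream_space (measure_pmf (bernoulli_pmf q))"
  define e where "e i = measure ?S (Ev (2*K) (int i))" for i
  define r where "r = (1-q)/q"
  have r: "0 < r" "r < 1" using q by (auto simp: r_def field_simps)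
  have e0: "e 0 = 0" using K by (simp add: e_def Ev_bot)
  have "prob_space ?S" by (rule prob_space.prob_space_stream_space[OF prob_space_measure_pmf])
  moreover have "space ?S = UNIV" by (simp add: space_stream_space)
  ultimately have eN: "e (2*K) = 1" unfolding e_def using Ev_top[of "2*K"]
    by (metis of_nat_mult of_nat_numeral prob_space.prob_space)
  have rec: "e i = q * e (Suc i) + (1-q) * e (i-1)" if "0 < i" "i < 2*K" for i
  proof -
    have "int (Suc i) = int i + 1" "int (i - 1) = int i - 1" using that by auto
    then show ?thesis unfolding e_def using gambler_rec[of q "int i" "2*K"] that q by (simp only:)
  qed
  define S where "S i = (\<Sum>l<i. r^l)" for i
  have sol: "e i = e 1 * S i" if "i \<le> 2*K" for i
    using rec_sol[of q e "2*K" i] q e0 rec that by (simp add: S_def r_def)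
  have Sgp: "S i = (1 - r^i)/(1-r)" for i using r by (simp add: S_def sum_gp_strict)
  have rK: "0 < r^K" "r^K < 1" using r K by (auto simp: power_less_one_iff)
  have p2: "r^(2*K) = r^K * r^K" by (metis mult_2 power_add)
  have S2: "S (2*K) = S K * (1 + r^K)"
    unfolding Sgp p2 using r by (simp add: field_simps)
  have SK: "0 < S K" unfolding Sgp using r rK by simp
  have "1 = e 1 * S (2*K)" using sol[of "2*K"] eN by simp
  moreover have S2p: "0 < S (2*K)" using S2 SK rK by simp
  ultimately have "e 1 = 1 / S (2*K)" by (simp add: field_simps)
  then have "e K = S K / S (2*K)" using sol[of K] by simp
  also have "\<dots> = 1/(1 + r^K)" unfolding S2 using SK rK by simp
  finally show ?thesis by (simp add: e_def r_def)
qed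

lemma flip_prob_pos: "0 < flip_prob e" by (simp add: flip_prob_def add_pos_pos)
lemma flip_prob_lt1: "flip_prob e < 1"
proof -
  have "1 < 1 + exp e" using exp_gt_zero[of e] by linarith
  moreover have "0 < 1 + exp e" using exp_gt_zero[of e] by linarith
  ultimately show ?thesis unfolding flip_prob_def by (simp add: pos_divide_less_eq)
qed

lemma flip_meas[measurable]: "flip_prob \<in> borel_measurable borel"
  unfolding flip_prob_def by measurable

lemma inner_pmf:
  assumes "0 \<le> p" "p \<le> 1" "0 \<le> x" "x \<le> 1"
  shows "pmf (do { s \<leftarrow> bernoulli_pmf p; f \<leftarrow> bernoulli_pmf x; return_pmf (s \<noteq> f) }) b
     = (if b then p - (2*p-1) * x else 1 - (p - (2*p-1) * x))"
  using assms by (cases b) (simp_all add: pmf_bind algebra_simps)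

lemma flip_integrable:
  assumes D: "prob_space D" "sets D = sets borel"
  shows "integrable D flip_prob"
proof -
  interpret prob_space D by (rule D(1))
  have m: "flip_prob \<in> borel_measurable D"
    by (subst measurable_cong_sets[OF D(2) refl]) (rule flip_meas)
  show ?thesis
  proof (rule integrable_const_bound[where B=1])
    show "AE x in D. norm (flip_prob x) \<le> 1"
      by (rule AE_I2) (metis abs_of_pos flip_prob_pos flip_prob_lt1 less_imp_le real_norm_def)
  qed (rule m)
qed

lemma ubar_bounds:
  assumes D: "prob_space D" "sets D = sets borel"
  shows "0 \<le> ubar D" "ubar D \<le> 1"
proof -
  interpret prob_space D by (rule D(1))
  show "0 \<le> ubar D" unfolding ubar_def by (rule Bochner_Integration.integral_nonneg) (simp add: flip_prob_pos less_imp_le)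
  have "ubar D \<le> (\<integral>e. 1 \<partial>D)" unfolding ubar_def
    by (rule integral_mono) (auto simp: flip_integrable[OF D] flip_prob_lt1 less_imp_le)
  then show "ubar D \<le> 1" by (simp add: prob_space)
qed

lemma report_law_eq:
  assumes D: "prob_space D" "sets D = sets borel" and p: "0 \<le> p" "p \<le> 1"
  shows "report_law p D = measure_pmf (bernoulli_pmf (p - (2*p-1) * ubar D))"
proof -
  interpret prob_space D by (rule D(1))
  define K where "K e = measure_pmf (do { s \<leftarrow> bernoulli_pmf p; f \<leftarrow> bernoulli_pmf (flip_prob e); return_pmf (s \<noteq> f) })" for e
  define g where "g e = p - (2*p-1) * flip_prob e" for e
  have fb: "0 \<le> flip_prob e" "flip_prob e \<le> 1" for e using flip_prob_pos flip_prob_lt1 less_imp_le by auto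
  have Kpmf: "emeasure (K e) A = ennreal (\<Sum>b\<in>A. if b then g e else 1 - g e)" for e A
  proof -
    have "emeasure (K e) A = ennreal (measure (K e) A)" by (simp add: K_def measure_pmf.emeasure_eq_measure)
    also have "\<dots> = ennreal (\<Sum>b\<in>A. pmf (do { s \<leftarrow> bernoulli_pmf p; f \<leftarrow> bernoulli_pmf (flip_prob e); return_pmf (s \<noteq> f) }) b)"
      unfolding K_def by (subst measure_measure_pmf_finite) auto
    also have "\<dots> = ennreal (\<Sum>b\<in>A. if b then g e else 1 - g e)"
      by (simp only: inner_pmf[OF p fb] g_def)
    finally show ?thesis .
  qed
  have fm: "flip_prob \<in> borel_measurable D"
    by (subst measurable_cong_sets[OF D(2) refl]) (rule flip_meas)
  have gm: "g \<in> borel_measurable D"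
    unfolding g_def using fm by measurable
  have gi: "integrable D g" unfolding g_def using flip_integrable[OF D] by simp
  have gint: "(\<integral>e. g e \<partial>D) = p - (2*p-1) * ubar D"
    unfolding g_def ubar_def using flip_integrable[OF D] by (simp add: prob_space)
  have g01: "0 \<le> g e" "g e \<le> 1" for e
  proof -
    have a: "p * flip_prob e \<le> p" using fb[of e] p by (simp add: mult_left_le)
    have b: "p * flip_prob e \<le> flip_prob e" using fb[of e] p by (simp add: mult_left_le_one_le)
    have c: "0 \<le> p * flip_prob e" using fb[of e] p by simp
    have d: "0 \<le> (1 - p) * (1 - flip_prob e)" using fb[of e] p by simp
    show "0 \<le> g e" "g e \<le> 1" using a b c d unfolding g_def by (auto simp: algebra_simps)
  qed
  have Kmeas: "K \<in> measurable D (subprob_algebra (count_space UNIV))"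
  proof (rule measurable_subprob_algebra)
    fix a show "subprob_space (K a)" unfolding K_def by (rule prob_space_imp_subprob_space[OF prob_space_measure_pmf])
  next
    fix a show "sets (K a) = sets (count_space UNIV)" by (simp add: K_def)
  next
    fix A :: "bool set"
    have "(\<lambda>a. emeasure (K a) A) = (\<lambda>a. ennreal (\<Sum>b\<in>A. if b then g a else 1 - g a))"
      using Kpmf by auto
    also have "\<dots> \<in> borel_measurable D" using gm by measurable
    finally show "(\<lambda>a. emeasure (K a) A) \<in> borel_measurable D" .
  qed
  have rl: "report_law p D = D \<bind> K" unfolding report_law_def K_def by (rule refl)
  have q01: "0 \<le> p - (2*p-1) * ubar D" "p - (2*p-1) * ubar D \<le> 1"
    using gint g01 Bochner_Integration.integral_nonneg[of D g] integral_mono[OF gi _ , of "\<lambda>_. 1"] by (auto simp: prob_space)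
  show ?thesis unfolding rl
  proof (rule measure_eqI_finite[where A=UNIV])
    show "sets (D \<bind> K) = Pow UNIV"
      by (subst sets_bind[where N="count_space UNIV"]) (auto simp: K_def not_empty)
    show "sets (measure_pmf (bernoulli_pmf (p - (2 * p - 1) * ubar D))) = Pow UNIV" by simp
    show "finite (UNIV :: bool set)" by simp
  next
    fix a :: bool
    have "emeasure (D \<bind> K) {a} = (\<integral>\<^sup>+e. emeasure (K e) {a} \<partial>D)"
      by (rule emeasure_bind[OF not_empty Kmeas]) simp
    also have "\<dots> = (\<integral>\<^sup>+e. ennreal (if a then g e else 1 - g e) \<partial>D)"
      by (simp add: Kpmf)
    also have "\<dots> = ennreal (\<integral>e. (if a then g e else 1 - g e) \<partial>D)"
      by (rule nn_integral_eq_integral) (cases a; use gi g01 in \<open>auto intro!: Bochner_Integration.integrable_diff\<close>)+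
    also have "\<dots> = ennreal (if a then p - (2*p-1) * ubar D else 1 - (p - (2*p-1) * ubar D))"
      using gi gint by (cases a) (auto simp: prob_space)
    also have "\<dots> = emeasure (measure_pmf (bernoulli_pmf (p - (2 * p - 1) * ubar D))) {a}"
      using q01 by (cases a) (simp_all add: emeasure_pmf_single)
    finally show "emeasure (D \<bind> K) {a} = emeasure (measure_pmf (bernoulli_pmf (p - (2 * p - 1) * ubar D))) {a}" .
  qed
qed

lemma vt_eq:
  assumes p: "1/2 < p" "p < 1" and k: "2 \<le> k"
    and a: "a = (1-p)/p" and b: "b = a powr (1/(real k - 1))"
  shows "v_tilde p k = (b - a) / ((1 + b) * (1 - a))"
proof -
  have a0: "0 < a" "a < 1" unfolding a using p by (auto simp: field_simps)
  have b0: "0 < b" using a0 b by simp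
  have k1: "real k - 1 > 0" using k by simp
  have "(real k - 2) / (real k - 1) = 1 - 1/(real k - 1)" using k1 by (simp add: field_simps)
  then have t: "a powr ((real k - 2) / (real k - 1)) = a / b"
    using a0 by (simp add: powr_diff b)
  have "-1 / (real k - 1) = - (1/(real k - 1))" by simp
  then have m: "a powr (-1 / (real k - 1)) = 1 / b"
    by (simp add: powr_minus b divide_inverse)
  have n1: "1 - a/b = (b - a)/b" using b0 by (simp add: field_simps)
  have n2: "1 - a/b + 1/b - a = ((1 + b) * (1 - a))/b" using b0 by (simp add: field_simps)
  have dd: "(x/y)/(z/y) = x/z" if "y \<noteq> 0" for x y z :: real
    using that by (simp add: divide_divide_times_eq)
  have "(1 - a/b) / (1 - a/b + 1/b - a) = ((b - a)/b) / (((1 + b) * (1 - a))/b)"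
    by (subst n2, subst n1) (rule refl)
  also have "\<dots> = (b - a) / ((1 + b) * (1 - a))" using b0 by (subst dd) auto
  finally have "(1 - a/b) / (1 - a/b + 1/b - a) = (b - a) / ((1 + b) * (1 - a))" .
  then show ?thesis unfolding v_tilde_def Let_def a[symmetric] t m .
qed

lemma vt_bounds:
  assumes p: "1/2 < p" "p < 1" and k: "2 \<le> k"
  shows "0 \<le> v_tilde p k" "v_tilde p k \<le> 1/2"
proof -
  define a where "a = (1-p)/p"
  define b where "b = a powr (1/(real k - 1))"
  have a0: "0 < a" "a < 1" using p by (auto simp: a_def field_simps)
  have k1: "1/(real k - 1) \<le> 1" "0 \<le> 1/(real k - 1)" using k by (auto simp: field_simps)
  have "a powr 1 \<le> a powr (1/(real k - 1))" by (rule powr_mono') (use k1 a0 in auto)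
  then have ab: "a \<le> b" using a0 by (simp add: b_def)
  have b1: "b \<le> 1" unfolding b_def by (rule powr_le1) (use k1 a0 in auto)
  have v: "v_tilde p k = (b - a) / ((1 + b) * (1 - a))" by (rule vt_eq[OF p k a_def b_def])
  have den: "0 < (1 + b) * (1 - a)" using a0 ab by (auto intro!: mult_pos_pos)
  show "0 \<le> v_tilde p k" unfolding v using ab den by simp
  have "2 * (b - a) \<le> (1 + b) * (1 - a)"
  proof -
    have "0 \<le> (1 - b) * (1 + a)" using b1 a0 by simp
    then show ?thesis by (simp add: algebra_simps)
  qed
  then show "v_tilde p k \<le> 1/2" unfolding v using den by (simp add: divide_le_eq)
qed

lemma thr:
  assumes p: "1/2 < p" "p < 1" and k: "2 \<le> k"
    and u: "v_tilde p k \<le> u" "u < v_tilde p (k+1)"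
  shows "cascade_threshold p u = int k"
proof -
  define a where "a = (1-p)/p"
  define b where "b = a powr (1/(real k - 1))"
  define b' where "b' = a powr (1/(real k))"
  have a0: "0 < a" "a < 1" using p by (auto simp: a_def field_simps)
  have k1: "real k - 1 > 0" using k by simp
  have b0: "0 < b" "0 < b'" using a0 by (auto simp: b_def b'_def)
  have v: "v_tilde p k = (b - a) / ((1 + b) * (1 - a))" by (rule vt_eq[OF p k a_def b_def])
  have "v_tilde p (k+1) = (b' - a) / ((1 + b') * (1 - a))"
    by (rule vt_eq[OF p _ a_def]) (use k in \<open>auto simp: b'_def\<close>)
  note v' = this
  have u0: "0 \<le> u" using vt_bounds[OF p k] u by simp
  have u1: "u < 1/2" using vt_bounds[OF p, of "k+1"] k u by simp
  define c where "c = u * (1 - a)"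
  have c0: "0 \<le> c" "2 * c < 1 - a" using u0 u1 a0 by (auto simp: c_def)
  have e1: "a + c = ((1 - u) * (1 - p) + u * p) / p" using p by (simp add: a_def c_def field_simps)
  have e2: "1 - c = (u * (1 - p) + p * (1 - u)) / p" using p by (simp add: a_def c_def field_simps)
  have dd: "(x/y)/(z/y) = x/z" if "y \<noteq> 0" for x y z :: real
    using that by (simp add: divide_divide_times_eq)
  have rho: "rho_bar p u = (a + c) / (1 - c)"
    unfolding rho_bar_def e1 e2 using p by (subst dd) auto
  have den: "0 < (1 + b) * (1 - a)" "0 < (1 + b') * (1 - a)" using a0 b0 by auto
  have "b - a \<le> u * ((1 + b) * (1 - a))" using u(1) den unfolding v by (simp add: divide_le_eq mult.commute)
  then have "b * (1 - c) \<le> a + c" by (simp add: c_def algebra_simps)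
  then have r1: "b \<le> rho_bar p u" unfolding rho using c0 a0 by (simp add: le_divide_eq)
  have "u * ((1 + b') * (1 - a)) < b' - a" using u(2) den unfolding v' by (simp add: less_divide_eq mult.commute)
  then have "a + c < b' * (1 - c)" by (simp add: c_def algebra_simps)
  then have r2: "rho_bar p u < b'" unfolding rho using c0 a0 by (simp add: divide_less_eq)
  have rpos: "0 < rho_bar p u" using r1 b0 by linarith
  have rlt1: "rho_bar p u < 1" unfolding rho using c0 a0 by (simp add: divide_less_eq)
  have lr: "ln (rho_bar p u) < 0" using rpos rlt1 by simp
  have la: "ln a < 0" using a0 by simp
  have "ln b \<le> ln (rho_bar p u)" using r1 b0 rpos by simp
  moreover have "ln b = ln a / (real k - 1)" unfolding b_def by simp
  ultimately have l1: "ln a / (real k - 1) \<le> ln (rho_bar p u)" by simp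
  have "ln (rho_bar p u) < ln b'" using r2 b0 rpos by simp
  moreover have "ln b' = ln a / real k" unfolding b'_def by simp
  ultimately have l2: "ln (rho_bar p u) < ln a / real k" by simp
  have x1: "real k - 1 \<le> ln a / ln (rho_bar p u)"
  proof -
    have "ln a \<le> (real k - 1) * ln (rho_bar p u)" using l1 k1 by (simp add: divide_le_eq mult.commute)
    then show ?thesis using lr by (simp add: neg_le_divide_eq mult.commute)
  qed
  have x2: "ln a / ln (rho_bar p u) < real k"
  proof -
    have "real k * ln (rho_bar p u) < ln a" using l2 k by (simp add: less_divide_eq mult.commute)
    then show ?thesis using lr by (simp add: neg_divide_less_eq mult.commute)
  qed
  have "\<lfloor>log (rho_bar p u) ((1 - p) / p)\<rfloor> = int k - 1"
    unfolding log_def a_def[symmetric] using x1 x2 by (simp add: floor_eq_iff)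
  then show ?thesis unfolding cascade_threshold_def by simp
qed

lemma cc_set: "{w. \<exists>n. walk w n = int K \<and> (\<forall>m<n. \<bar>walk w m\<bar> < int K)} = Ev (2*K) (int K)"
proof -
  have e1: "(\<bar>x\<bar> < int K) = (0 < int K + x \<and> int K + x < int (2*K))" for x :: int by auto
  have e2: "(x = int K) = (int K + x = int (2*K))" for x :: int by auto
  show ?thesis unfolding Ev_def by (simp only: e1 e2)
qed

lemma ccp:
  assumes p: "1/2 < p" "p < 1" and k: "2 \<le> k"
    and D: "prob_space D" "sets D = sets borel"
    and u: "v_tilde p k \<le> ubar D" "ubar D < v_tilde p (k+1)"
  shows "correct_cascade_prob p D = 1 / (1 + ((1 - (p - (2*p-1) * ubar D)) / (p - (2*p-1) * ubar D))^k)"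
proof -
  define q where "q = p - (2*p-1) * ubar D"
  have u0: "0 \<le> ubar D" using vt_bounds[OF p k] u by simp
  have u1: "ubar D < 1/2" using vt_bounds[OF p, of "k+1"] k u by simp
  have "0 \<le> (2*p-1) * ubar D" using p u0 by simp
  then have q1: "q < 1" using p by (simp add: q_def)
  have "(2*p-1) * ubar D < (2*p-1) * (1/2)" using p u1 by (intro mult_strict_left_mono) auto
  then have q2: "1/2 < q" by (simp add: q_def algebra_simps)
  have "correct_cascade_prob p D = measure (stream_space (measure_pmf (bernoulli_pmf q))) (Ev (2*k) (int k))"
  proof -
    have rl: "report_law p D = measure_pmf (bernoulli_pmf q)"
      unfolding q_def by (rule report_law_eq[OF D]) (use p in auto)
    show ?thesis unfolding correct_cascade_prob_def Let_def thr[OF p k u] rl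
      by (simp add: cc_set)
  qed
  also have "\<dots> = 1 / (1 + ((1-q)/q)^k)" by (rule gambler) (use q1 q2 k in auto)
  finally show ?thesis by (simp add: q_def)
qed

theorem theorem3:
  fixes p :: real and k :: nat
  assumes "1/2 < p" and "p < 1" and "k \<ge> 2"
  shows "(\<forall>ub. v_tilde p k \<le> ub \<and> ub < v_tilde p (k + 1)
            \<longrightarrow> cascade_threshold p ub = int k)
       \<and> (\<forall>D1 D2 :: real measure.
            prob_space D1 \<and> sets D1 = sets borel \<and>
            prob_space D2 \<and> sets D2 = sets borel \<and>
            v_tilde p k \<le> ubar D1 \<and> ubar D2 < v_tilde p (k + 1) \<and>
            ubar D1 < ubar D2
            \<longrightarrow> correct_cascade_prob p D2 < correct_cascade_prob p D1)"
proof (intro conjI allI impI)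
  fix ub assume "v_tilde p k \<le> ub \<and> ub < v_tilde p (k + 1)"
  then show "cascade_threshold p ub = int k" using thr[OF assms] by blast
next
  fix D1 D2 :: "real measure"
  assume h: "prob_space D1 \<and> sets D1 = sets borel \<and>
            prob_space D2 \<and> sets D2 = sets borel \<and>
            v_tilde p k \<le> ubar D1 \<and> ubar D2 < v_tilde p (k + 1) \<and>
            ubar D1 < ubar D2"
  have p: "1/2 < p" "p < 1" and k: "2 \<le> k" using assms by auto
  define q1 where "q1 = p - (2*p-1) * ubar D1"
  define q2 where "q2 = p - (2*p-1) * ubar D2"
  have c1: "correct_cascade_prob p D1 = 1 / (1 + ((1 - q1)/q1)^k)"
    unfolding q1_def by (rule ccp[OF p k]) (use h in auto)
  have c2: "correct_cascade_prob p D2 = 1 / (1 + ((1 - q2)/q2)^k)"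
    unfolding q2_def by (rule ccp[OF p k]) (use h in auto)
  have u1: "ubar D2 < 1/2" using vt_bounds[OF p, of "k+1"] k h by simp
  have "(2*p-1) * ubar D2 < (2*p-1) * (1/2)" using p u1 by (intro mult_strict_left_mono) auto
  then have q2h: "1/2 < q2" by (simp add: q2_def algebra_simps)
  have "(2*p-1) * ubar D1 < (2*p-1) * ubar D2" using p h by (intro mult_strict_left_mono) auto
  then have q12: "q2 < q1" by (simp add: q1_def q2_def)
  have u0: "0 \<le> ubar D1" using vt_bounds[OF p k] h by simp
  have "0 \<le> (2*p-1) * ubar D1" using p u0 by simp
  then have q1l: "q1 \<le> 1" using p by (simp add: q1_def)
  have r: "(1 - q1)/q1 < (1 - q2)/q2" using q2h q12 by (simp add: field_simps)
  have r0: "0 \<le> (1 - q1)/q1" using q1l q2h q12 by simp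
  have "((1 - q1)/q1)^k < ((1 - q2)/q2)^k" by (rule power_strict_mono) (use r r0 k in auto)
  then show "correct_cascade_prob p D2 < correct_cascade_prob p D1"
    unfolding c1 c2 using r0 by (simp add: frac_less2 add_pos_nonneg)
qed

end
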